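(* Let $D_{\mathrm{jnt}}$ be any distribution of $(\mathsf X,\bar{\mathsf Y},\mathsf Y)$ on $\mathcal X\times\{0,1\}\times\{0,1\}$, let $c,\bar c\in[0,1]$ and $\bar D\in\{\bar D_{\mathrm{DP}},\bar D_{\mathrm{EO}}\}$. Let $F$ be the fairness frontier: for $\tau\ge0$, $F(\tau)=V(\tau)-V(0)$ where $V(\tau)=\inf\{\mathrm{CS}(f;D,c): f\colon\mathcal X\to[0,1],\ \mathrm{CS}^\diamond(f;\bar D,\bar c)\ge\tau\}$. Define $$B_{c,\bar c}(u,v)=|u-\bar c|\cdot\mathbf 1[(u-\bar c)(v-c)<0],\qquad \Delta_{c,\bar c}(\bar\eta,\eta)=\mathbb E_{\mathsf X}\big[B_{c,\bar c}(\bar\eta(\mathsf X),\eta(\mathsf X))\big]-\mathbb I_\varphi(\bar P_1,\bar P_0),$$ with $\varphi(t)=-\min\big((1-\bar c)\bar\pi t,\ \bar c(1-\bar\pi)\big)$, and analogously $\Delta_{-c,\bar c}(\bar\eta,-\eta)=\mathbb E_{\mathsf X}\big[|\bar\eta(\mathsf X)-\bar c|\,\mathbf 1[(\bar\eta(\mathsf X)-\bar c)(-\eta(\mathsf X)+c)<0]\big]-\mathbb I_\varphi(\bar P_1,\bar P_0)$. Let $\tau^*=\min\big(\Delta_{c,\bar c}(\bar\eta,\eta),\Delta_{-c,\bar c}(\bar\eta,-\eta)\big)$. Then $F(\tau)=0$ for every $\tau\in[0,\tau^*]$.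
   Context: $D$ is the law of $(\mathsf X,\mathsf Y)$, $\bar D_{\mathrm{DP}}$ the law of $(\mathsf X,\bar{\mathsf Y})$, $\bar D_{\mathrm{EO}}$ the law of $(\mathsf X,\bar{\mathsf Y})$ conditional on $\mathsf Y=1$. $\eta(x)=\Pr(\mathsf Y=1\mid\mathsf X=x)$. With respect to $\bar D$: $\bar\eta(x)=\Pr_{\bar D}(\bar{\mathsf Y}=1\mid\mathsf X=x)$, $\bar\pi=\Pr_{\bar D}(\bar{\mathsf Y}=1)$, $\bar P_y$ is the law of $\mathsf X$ given $\bar{\mathsf Y}=y$ under $\bar D$, and $\mathbb E_{\mathsf X}$ is expectation over the $\mathsf X$-marginal of $\bar D$. For a convex $\varphi$, the $f$-divergence is $\mathbb I_\varphi(P,Q)=\int q\,\varphi(p/q)\,d\mu$ for densities $p,q$ w.r.t. a dominating measure $\mu$; for the $\varphi$ above this equals $-\int\min\big((1-\bar c)\bar\pi\,p,\ \bar c(1-\bar\pi)\,q\big)\,d\mu$. A randomised classifier $f\colon\mathcal X\to[0,1]$ predicts $1$ on $x$ with probability $f(x)$. For a distribution $E$ of $(\mathsf X,\mathsf Z)$ on $\mathcal X\times\{0,1\}$ with $p=\Pr(\mathsf Z=1)$: $\mathrm{FNR}(f;E)=\mathbb E_{\mathsf X\mid\mathsf Z=1}[1-f(\mathsf X)]$, $\mathrm{FPR}(f;E)=\mathbb E_{\mathsf X\mid\mathsf Z=0}[f(\mathsf X)]$, $\mathrm{CS}(f;E,c)=p(1-c)\,\mathrm{FNR}(f;E)+(1-p)c\,\mathrm{FPR}(f;E)$,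 and $\mathrm{CS}^\diamond(f;E,c)=\min\big(\mathrm{CS}(f;E,c),\mathrm{CS}(1-f;E,c)\big)$. *)

theory Defs
  imports "HOL-Probability.Probability"
begin

text \<open>The joint distribution of (X, Ybar, Y) is a probability measure on
  'a \<times> bool \<times> bool; label True stands for 1.  MX is the measurable space on 'a.\<close>

definition condm :: "'b measure \<Rightarrow> 'b set \<Rightarrow> 'b measure" where
  "condm M A = density M (\<lambda>\<omega>. ennreal (indicator A \<omega> / measure M A))"

definition D_of :: "'a measure \<Rightarrow> ('a \<times> bool \<times> bool) measure \<Rightarrow> ('a \<times> bool) measure" where
  "D_of MX M = distr M (MX \<Otimes>\<^sub>M count_space UNIV) (\<lambda>\<omega>. (fst \<omega>, snd (snd \<omega>)))"

definition D_DP :: "'a measure \<Rightarrow> ('a \<times> bool \<times> bool) measure \<Rightarrow> ('a \<times> bool) measure" where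
  "D_DP MX M = distr M (MX \<Otimes>\<^sub>M count_space UNIV) (\<lambda>\<omega>. (fst \<omega>, fst (snd \<omega>)))"

definition D_EO :: "'a measure \<Rightarrow> ('a \<times> bool \<times> bool) measure \<Rightarrow> ('a \<times> bool) measure" where
  "D_EO MX M = distr (condm M {\<omega> \<in> space M. snd (snd \<omega>)})
      (MX \<Otimes>\<^sub>M count_space UNIV) (\<lambda>\<omega>. (fst \<omega>, fst (snd \<omega>)))"

definition marg :: "'a measure \<Rightarrow> ('a \<times> bool) measure \<Rightarrow> 'a measure" where
  "marg MX E = distr E MX fst"

definition prior :: "('a \<times> bool) measure \<Rightarrow> real" where
  "prior E = measure E {\<omega> \<in> space E. snd \<omega>}"

definition cexp :: "'b measure \<Rightarrow> 'b set \<Rightarrow> ('b \<Rightarrow> real) \<Rightarrow> real" where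
  "cexp E A g = (\<integral>\<omega>. indicator A \<omega> * g \<omega> \<partial>E) / measure E A"

definition FNR :: "('a \<Rightarrow> real) \<Rightarrow> ('a \<times> bool) measure \<Rightarrow> real" where
  "FNR f E = cexp E {\<omega> \<in> space E. snd \<omega>} (\<lambda>\<omega>. 1 - f (fst \<omega>))"

definition FPR :: "('a \<Rightarrow> real) \<Rightarrow> ('a \<times> bool) measure \<Rightarrow> real" where
  "FPR f E = cexp E {\<omega> \<in> space E. \<not> snd \<omega>} (\<lambda>\<omega>. f (fst \<omega>))"

definition CS :: "('a \<Rightarrow> real) \<Rightarrow> ('a \<times> bool) measure \<Rightarrow> real \<Rightarrow> real" where
  "CS f E c = prior E * (1 - c) * FNR f E + (1 - prior E) * c * FPR f E"

definition CSd :: "('a \<Rightarrow> real) \<Rightarrow> ('a \<times> bool) measure \<Rightarrow> real \<Rightarrow> real" where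
  "CSd f E c = min (CS f E c) (CS (\<lambda>x. 1 - f x) E c)"

definition classifiers :: "'a measure \<Rightarrow> ('a \<Rightarrow> real) set" where
  "classifiers MX = {f. f \<in> borel_measurable MX \<and> (\<forall>x \<in> space MX. 0 \<le> f x \<and> f x \<le> 1)}"

text \<open>V(tau), infimum in the extended reals (inf of empty set = +infinity)\<close>
definition Vval :: "'a measure \<Rightarrow> ('a \<times> bool) measure \<Rightarrow> ('a \<times> bool) measure
    \<Rightarrow> real \<Rightarrow> real \<Rightarrow> real \<Rightarrow> ereal" where
  "Vval MX D Db c cb \<tau> =
     Inf {ereal (CS f D c) | f. f \<in> classifiers MX \<and> CSd f Db cb \<ge> \<tau>}"

definition frontier :: "'a measure \<Rightarrow> ('a \<times> bool) measure \<Rightarrow> ('a \<times> bool) measure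
    \<Rightarrow> real \<Rightarrow> real \<Rightarrow> real \<Rightarrow> ereal" where
  "frontier MX D Db c cb \<tau> = Vval MX D Db c cb \<tau> - Vval MX D Db c cb 0"

text \<open>g is a version of x \<mapsto> Pr_E(Z = 1 | X = x)\<close>
definition is_cond_prob :: "'a measure \<Rightarrow> ('a \<times> bool) measure \<Rightarrow> ('a \<Rightarrow> real) \<Rightarrow> bool" where
  "is_cond_prob MX E g \<longleftrightarrow> g \<in> borel_measurable MX \<and> (\<forall>x \<in> space MX. 0 \<le> g x \<and> g x \<le> 1) \<and>
     (\<forall>A \<in> sets MX. (\<integral>x. indicator A x * g x \<partial>marg MX E) = measure E (A \<times> {True}))"

definition condlaw :: "'a measure \<Rightarrow> ('a \<times> bool) measure \<Rightarrow> bool \<Rightarrow> 'a measure" where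
  "condlaw MX E y = distr (condm E {\<omega> \<in> space E. snd \<omega> = y}) MX fst"

definition fdiv :: "'a measure \<Rightarrow> (real \<Rightarrow> real) \<Rightarrow> 'a measure \<Rightarrow> 'a measure \<Rightarrow> real" where
  "fdiv \<mu> \<phi> P Q = (\<integral>x. enn2real (RN_deriv \<mu> Q x) *
      \<phi> (enn2real (RN_deriv \<mu> P x) / enn2real (RN_deriv \<mu> Q x)) \<partial>\<mu>)"

definition phi :: "real \<Rightarrow> real \<Rightarrow> real \<Rightarrow> real" where
  "phi cb \<pi> t = - min ((1 - cb) * \<pi> * t) (cb * (1 - \<pi>))"

definition Bfun :: "real \<Rightarrow> real \<Rightarrow> real \<Rightarrow> real \<Rightarrow> real" where
  "Bfun c cb u v = \<bar>u - cb\<bar> * (if (u - cb) * (v - c) < 0 then 1 else 0)"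

text \<open>Delta_{c,cb}(etabar, eta); the dominating measure for I_phi is the X-marginal of Db\<close>
definition Delta :: "'a measure \<Rightarrow> ('a \<times> bool) measure \<Rightarrow> real \<Rightarrow> real
    \<Rightarrow> ('a \<Rightarrow> real) \<Rightarrow> ('a \<Rightarrow> real) \<Rightarrow> real" where
  "Delta MX Db c cb etab eta =
     (\<integral>x. Bfun c cb (etab x) (eta x) \<partial>marg MX Db)
     - fdiv (marg MX Db) (phi cb (prior Db)) (condlaw MX Db True) (condlaw MX Db False)"

end

theory Submission imports Defs begin

lemma space_E:
  assumes "sets E = sets (MX \<Otimes>\<^sub>M (count_space (UNIV::bool set)))"
  shows "space E = space MX \<times> UNIV"
  using sets_eq_imp_space_eq[OF assms] by (simp add: space_pair_measure)

lemma condm_emeasure: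
  assumes "finite_measure M" "A \<in> sets M" "X \<in> sets M"
  shows "emeasure (condm M A) X = ennreal (measure M (X \<inter> A) / measure M A)"
proof -
  have "emeasure (condm M A) X = (\<integral>\<^sup>+ x. ennreal (indicator A x / measure M A) * indicator X x \<partial>M)"
    unfolding condm_def using assms by (subst emeasure_density) auto
  also have "\<dots> = (\<integral>\<^sup>+ x. ennreal (1 / measure M A) * indicator (X \<inter> A) x \<partial>M)"
    by (intro nn_integral_cong) (auto simp: indicator_def)
  also have "\<dots> = ennreal (1 / measure M A) * emeasure M (X \<inter> A)"
    using assms by (subst nn_integral_cmult_indicator) auto
  also have "\<dots> = ennreal (measure M (X \<inter> A) / measure M A)"
    using assms by (simp add: finite_measure.emeasure_eq_measure ennreal_mult'[symmetric])
  finally show ?thesis .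
qed

lemma condm_PN:
  assumes "finite_measure M" "A \<in> sets M"
  shows "prob_space (condm M A) \<or> emeasure (condm M A) (space (condm M A)) = 0"
proof -
  have sp: "space (condm M A) = space M" by (simp add: condm_def)
  have "emeasure (condm M A) (space (condm M A)) = ennreal (measure M A / measure M A)"
    using condm_emeasure[OF assms, of "space M"] sp assms sets.sets_into_space
    by (simp add: Int_absorb1)
  then show ?thesis
    by (cases "measure M A = 0") (auto intro!: prob_spaceI)
qed

lemma PN_distr:
  assumes "prob_space E \<or> emeasure E (space E) = 0" "g \<in> measurable E N"
  shows "prob_space (distr E N g) \<or> emeasure (distr E N g) (space (distr E N g)) = 0"
proof (cases "prob_space E")
  case True then show ?thesis using assms prob_space.prob_space_distr by blast
next
  case False
  then have "emeasure E (space E) = 0" using assms by auto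
  then have "emeasure (distr E N g) (space N) = 0"
    using assms(2) by (subst emeasure_distr) (auto intro: emeasure_eq_0[of "space E"])
  then show ?thesis by simp
qed


lemma meas_fst:
  assumes "sets E = sets (MX \<Otimes>\<^sub>M (count_space (UNIV::bool set)))"
  shows "fst \<in> measurable E MX"
  using measurable_cong_sets[OF assms refl, of MX] measurable_fst by auto

lemma T_sets:
  assumes "sets E = sets (MX \<Otimes>\<^sub>M (count_space (UNIV::bool set)))"
  shows "{\<omega> \<in> space E. snd \<omega> = y} \<in> sets E" "A \<in> sets MX \<Longrightarrow> A \<times> {y} \<in> sets E"
proof -
  have "{\<omega> \<in> space E. snd \<omega> = y} = space MX \<times> {y}" using space_E[OF assms] by auto
  then show "{\<omega> \<in> space E. snd \<omega> = y} \<in> sets E" using assms by auto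
  show "A \<in> sets MX \<Longrightarrow> A \<times> {y} \<in> sets E" using assms by auto
qed

lemma cexp_mult:
  assumes "finite_measure E" "A \<in> sets E"
  shows "measure E A * cexp E A g = (\<integral>\<omega>. indicator A \<omega> * g \<omega> \<partial>E)"
proof (cases "measure E A = 0")
  case True
  then have "A \<in> null_sets E" using assms by (simp add: finite_measure.emeasure_eq_measure null_sets_def)
  then have "AE \<omega> in E. indicator A \<omega> * g \<omega> = 0"
    by (rule AE_mp[OF AE_not_in]) auto
  then show ?thesis using True by (simp add: integral_eq_zero_AE cexp_def)
qed (simp add: cexp_def)

lemma tower:
  assumes fin: "finite_measure E" and sE: "sets E = sets (MX \<Otimes>\<^sub>M (count_space (UNIV::bool set)))"
    and cp: "is_cond_prob MX E g" and h[measurable]: "h \<in> borel_measurable MX"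
  shows "(\<integral>\<omega>. indicator {\<omega> \<in> space E. snd \<omega>} \<omega> * h (fst \<omega>) \<partial>E) = (\<integral>x. g x * h x \<partial>marg MX E)"
proof -
  define T where "T = {\<omega> \<in> space E. snd \<omega>}"
  have T: "T \<in> sets E" using T_sets(1)[OF sE, of True] by (simp add: T_def)
  have mf[measurable]: "fst \<in> measurable E MX" by (rule meas_fst[OF sE])
  have gm[measurable]: "g \<in> borel_measurable MX" and g01: "\<forall>x\<in>space MX. 0 \<le> g x \<and> g x \<le> 1"
    using cp by (auto simp: is_cond_prob_def)
  have finm: "finite_measure (marg MX E)" unfolding marg_def
    by (rule finite_measure.finite_measure_distr[OF fin mf])
  have eq: "distr (density E (\<lambda>\<omega>. ennreal (indicator T \<omega>))) MX fst = density (marg MX E) (\<lambda>x. ennreal (g x))"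
  proof (rule measure_eqI)
    show "sets (distr (density E (\<lambda>\<omega>. ennreal (indicator T \<omega>))) MX fst) = sets (density (marg MX E) (\<lambda>x. ennreal (g x)))"
      by (simp add: marg_def)
    fix A assume "A \<in> sets (distr (density E (\<lambda>\<omega>. ennreal (indicator T \<omega>))) MX fst)"
    then have A: "A \<in> sets MX" by simp
    have AT: "A \<times> {True} \<in> sets E" using T_sets(2)[OF sE A] .
    have seteq: "fst -` A \<inter> space E \<inter> T = A \<times> {True}"
      using space_E[OF sE] sets.sets_into_space[OF A] by (auto simp: T_def)
    have "emeasure (distr (density E (\<lambda>\<omega>. ennreal (indicator T \<omega>))) MX fst) A
        = emeasure (density E (\<lambda>\<omega>. ennreal (indicator T \<omega>))) (fst -` A \<inter> space E)"
      using A by (subst emeasure_distr) auto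
    also have "\<dots> = emeasure E (fst -` A \<inter> space E \<inter> T)"
    proof -
      have m: "fst -` A \<inter> space E \<inter> T \<in> sets E" using A T by measurable
      have m2: "fst -` A \<inter> space E \<in> sets E" using A by measurable
      have "emeasure (density E (\<lambda>\<omega>. ennreal (indicator T \<omega>))) (fst -` A \<inter> space E)
           = (\<integral>\<^sup>+ \<omega>. ennreal (indicator T \<omega>) * indicator (fst -` A \<inter> space E) \<omega> \<partial>E)"
        using m2 T by (intro emeasure_density) auto
      also have "\<dots> = (\<integral>\<^sup>+ \<omega>. indicator (fst -` A \<inter> space E \<inter> T) \<omega> \<partial>E)"
        by (rule nn_integral_cong) (auto simp: indicator_def)
      also have "\<dots> = emeasure E (fst -` A \<inter> space E \<inter> T)"
        by (rule nn_integral_indicator[OF m])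
      finally show ?thesis .
    qed
    also have "\<dots> = emeasure E (A \<times> {True})"
      using AT seteq by simp
    finally have L: "emeasure (distr (density E (\<lambda>\<omega>. ennreal (indicator T \<omega>))) MX fst) A = emeasure E (A \<times> {True})" .
    have intg: "integrable (marg MX E) (\<lambda>x. g x * indicator A x)"
      using g01 A by (intro finite_measure.integrable_const_bound[OF finm, of _ 1] AE_I2)
        (auto simp: marg_def indicator_def)
    have "emeasure (density (marg MX E) (\<lambda>x. ennreal (g x))) A = (\<integral>\<^sup>+ x. ennreal (g x * indicator A x) \<partial>marg MX E)"
      using A by (subst emeasure_density) (auto simp: marg_def indicator_def intro!: nn_integral_cong)
    also have "\<dots> = ennreal (\<integral>x. g x * indicator A x \<partial>marg MX E)"
      using g01 intg by (intro nn_integral_eq_integral) (auto simp: marg_def)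
    also have "(\<integral>x. g x * indicator A x \<partial>marg MX E) = measure E (A \<times> {True})"
      using cp A by (simp add: is_cond_prob_def mult.commute)
    also have "ennreal (measure E (A \<times> {True})) = emeasure E (A \<times> {True})"
      using fin AT by (simp add: finite_measure.emeasure_eq_measure)
    finally show "emeasure (distr (density E (\<lambda>\<omega>. ennreal (indicator T \<omega>))) MX fst) A = emeasure (density (marg MX E) (\<lambda>x. ennreal (g x))) A"
      using L by simp
  qed
  have "(\<integral>x. g x * h x \<partial>marg MX E) = (\<integral>x. h x \<partial>density (marg MX E) (\<lambda>x. ennreal (g x)))"
    using g01 by (subst integral_density) (auto simp: marg_def)
  also have "\<dots> = (\<integral>x. h x \<partial>distr (density E (\<lambda>\<omega>. ennreal (indicator T \<omega>))) MX fst)"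
    using eq by simp
  also have "\<dots> = (\<integral>\<omega>. h (fst \<omega>) \<partial>density E (\<lambda>\<omega>. ennreal (indicator T \<omega>)))"
    by (subst integral_distr) auto
  also have "\<dots> = (\<integral>\<omega>. indicator T \<omega> * h (fst \<omega>) \<partial>E)"
    using T by (subst integral_density) auto
  finally show ?thesis by (simp add: T_def)
qed

lemma CS_formula:
  assumes pE: "prob_space E" and sE: "sets E = sets (MX \<Otimes>\<^sub>M (count_space (UNIV::bool set)))"
    and cp: "is_cond_prob MX E g" and fm[measurable]: "f \<in> borel_measurable MX"
    and f01: "\<forall>x\<in>space MX. 0 \<le> f x \<and> f x \<le> 1"
  shows "CS f E c = (\<integral>x. (1-c)*(g x*(1-f x)) + c*((1 - g x)* f x) \<partial>marg MX E)"
proof -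
  interpret prob_space E by (rule pE)
  define T where "T = {\<omega> \<in> space E. snd \<omega>}"
  define F where "F = {\<omega> \<in> space E. \<not> snd \<omega>}"
  have T: "T \<in> sets E" using T_sets(1)[OF sE, of True] by (simp add: T_def)
  have F: "F \<in> sets E" using T_sets(1)[OF sE, of False] by (simp add: F_def)
  have mf[measurable]: "fst \<in> measurable E MX" by (rule meas_fst[OF sE])
  have gm[measurable]: "g \<in> borel_measurable MX" and g01: "\<forall>x\<in>space MX. 0 \<le> g x \<and> g x \<le> 1"
    using cp by (auto simp: is_cond_prob_def)
  have finm: "finite_measure (marg MX E)" unfolding marg_def
    by (rule finite_measure.finite_measure_distr[OF finite_measure_axioms mf])
  have spE: "\<And>\<omega>. \<omega> \<in> space E \<Longrightarrow> fst \<omega> \<in> space MX" using space_E[OF sE] by auto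
  have i1: "integrable E (\<lambda>\<omega>. f (fst \<omega>))"
    using f01 spE by (intro integrable_const_bound[of _ 1] AE_I2) auto
  have i2: "integrable E (\<lambda>\<omega>. indicator T \<omega> * f (fst \<omega>))"
    using f01 spE T by (intro integrable_const_bound[of _ 1] AE_I2) (auto simp: indicator_def)
  have j1: "integrable (marg MX E) (\<lambda>x. g x * (1 - f x))"
    using f01 g01 by (intro finite_measure.integrable_const_bound[OF finm, of _ 1] AE_I2) (auto simp: marg_def abs_mult intro: mult_le_one)
  have j2: "integrable (marg MX E) (\<lambda>x. g x * f x)"
    using f01 g01 by (intro finite_measure.integrable_const_bound[OF finm, of _ 1] AE_I2) (auto simp: marg_def abs_mult intro: mult_le_one)
  have j3: "integrable (marg MX E) f"
    using f01 by (intro finite_measure.integrable_const_bound[OF finm, of _ 1] AE_I2) (auto simp: marg_def)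
  have a1: "prior E * FNR f E = (\<integral>x. g x * (1 - f x) \<partial>marg MX E)"
  proof -
    have "prior E * FNR f E = (\<integral>\<omega>. indicator T \<omega> * (1 - f (fst \<omega>)) \<partial>E)"
      unfolding prior_def FNR_def T_def[symmetric] by (rule cexp_mult[OF finite_measure_axioms T])
    also have "\<dots> = (\<integral>x. g x * (1 - f x) \<partial>marg MX E)"
      unfolding T_def by (rule tower[OF finite_measure_axioms sE cp]) simp
    finally show ?thesis .
  qed
  have pc: "1 - prior E = measure E F"
  proof -
    have "F = space E - T" by (auto simp: F_def T_def)
    then show ?thesis using prob_compl[OF T] by (simp add: prior_def T_def)
  qed
  have a2: "(1 - prior E) * FPR f E = (\<integral>x. f x \<partial>marg MX E) - (\<integral>x. g x * f x \<partial>marg MX E)"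
  proof -
    have "(1 - prior E) * FPR f E = (\<integral>\<omega>. indicator F \<omega> * f (fst \<omega>) \<partial>E)"
      unfolding pc FPR_def F_def[symmetric] by (rule cexp_mult[OF finite_measure_axioms F])
    also have "\<dots> = (\<integral>\<omega>. f (fst \<omega>) - indicator T \<omega> * f (fst \<omega>) \<partial>E)"
      by (rule Bochner_Integration.integral_cong) (auto simp: F_def T_def indicator_def)
    also have "\<dots> = (\<integral>\<omega>. f (fst \<omega>) \<partial>E) - (\<integral>\<omega>. indicator T \<omega> * f (fst \<omega>) \<partial>E)"
      using i1 i2 by (rule Bochner_Integration.integral_diff)
    also have "(\<integral>\<omega>. f (fst \<omega>) \<partial>E) = (\<integral>x. f x \<partial>marg MX E)"
      unfolding marg_def by (subst integral_distr) auto
    also have "(\<integral>\<omega>. indicator T \<omega> * f (fst \<omega>) \<partial>E) = (\<integral>x. g x * f x \<partial>marg MX E)"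
      unfolding T_def by (rule tower[OF finite_measure_axioms sE cp]) simp
    finally show ?thesis .
  qed
  have "CS f E c = (1-c) * (prior E * FNR f E) + c * ((1 - prior E) * FPR f E)"
    by (simp add: CS_def algebra_simps)
  also have "\<dots> = (1-c) * (\<integral>x. g x * (1 - f x) \<partial>marg MX E) + c * ((\<integral>x. f x \<partial>marg MX E) - (\<integral>x. g x * f x \<partial>marg MX E))"
    using a1 a2 by simp
  also have "\<dots> = (\<integral>x. (1-c)*(g x*(1-f x)) + c*(f x - g x * f x) \<partial>marg MX E)"
    using j1 j2 j3 by (simp add: integral_add integral_diff)
  also have "\<dots> = (\<integral>x. (1-c)*(g x*(1-f x)) + c*((1 - g x)* f x) \<partial>marg MX E)"
    by (rule Bochner_Integration.integral_cong) (auto simp: algebra_simps)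
  finally show ?thesis .
qed

lemma RN_bound:
  assumes A: "A \<in> sets \<mu>"
  shows "(\<integral>\<^sup>+ x. RN_deriv \<mu> N x * indicator A x \<partial>\<mu>) \<le> emeasure N A"
proof (cases "\<exists>f. f \<in> borel_measurable \<mu> \<and> density \<mu> f = N")
  case True
  then obtain f where "f \<in> borel_measurable \<mu>" "density \<mu> f = N" by blast
  then have d: "density \<mu> (RN_deriv \<mu> N) = N" by (rule RN_derivI)
  have "emeasure N A = emeasure (density \<mu> (RN_deriv \<mu> N)) A" using d by simp
  also have "\<dots> = (\<integral>\<^sup>+ x. RN_deriv \<mu> N x * indicator A x \<partial>\<mu>)"
    using A by (intro emeasure_density) auto
  finally show ?thesis by simp
next
  case False
  then have "RN_deriv \<mu> N = (\<lambda>_. 0)" by (auto simp: RN_deriv_def)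
  then show ?thesis by simp
qed

lemma RN_int:
  assumes A: "A \<in> sets \<mu>" and fin: "emeasure N A < \<infinity>"
  shows "integrable \<mu> (\<lambda>x. enn2real (RN_deriv \<mu> N x) * indicator A x)"
    "(\<integral>x. enn2real (RN_deriv \<mu> N x) * indicator A x \<partial>\<mu>) \<le> enn2real (emeasure N A)"
proof -
  have le: "(\<integral>\<^sup>+ x. ennreal (enn2real (RN_deriv \<mu> N x) * indicator A x) \<partial>\<mu>) \<le> emeasure N A"
  proof -
    have "(\<integral>\<^sup>+ x. ennreal (enn2real (RN_deriv \<mu> N x) * indicator A x) \<partial>\<mu>) \<le> (\<integral>\<^sup>+ x. RN_deriv \<mu> N x * indicator A x \<partial>\<mu>)"
      by (intro nn_integral_mono) (auto simp: indicator_def ennreal_enn2real_if)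
    also have "\<dots> \<le> emeasure N A" by (rule RN_bound[OF A])
    finally show ?thesis .
  qed
  show int: "integrable \<mu> (\<lambda>x. enn2real (RN_deriv \<mu> N x) * indicator A x)"
    using le fin A by (intro integrableI_nonneg) auto
  have "(\<integral>x. enn2real (RN_deriv \<mu> N x) * indicator A x \<partial>\<mu>) = enn2real (\<integral>\<^sup>+ x. ennreal (enn2real (RN_deriv \<mu> N x) * indicator A x) \<partial>\<mu>)"
    using A by (intro integral_eq_nn_integral) auto
  also have "\<dots> \<le> enn2real (emeasure N A)"
    using le fin by (intro enn2real_mono) auto
  finally show "(\<integral>x. enn2real (RN_deriv \<mu> N x) * indicator A x \<partial>\<mu>) \<le> enn2real (emeasure N A)" .
qed

lemma condlaw_meas:
  assumes pE: "prob_space E" and sE: "sets E = sets (MX \<Otimes>\<^sub>M (count_space (UNIV::bool set)))"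
    and S: "S \<in> sets MX"
  shows "emeasure (condlaw MX E y) S < \<infinity>"
    "measure E {\<omega> \<in> space E. snd \<omega> = y} * enn2real (emeasure (condlaw MX E y) S) = measure E (S \<times> {y})"
proof -
  interpret prob_space E by (rule pE)
  define T where "T = {\<omega> \<in> space E. snd \<omega> = y}"
  have T: "T \<in> sets E" using T_sets(1)[OF sE, of y] by (simp add: T_def)
  have mf[measurable]: "fst \<in> measurable E MX" by (rule meas_fst[OF sE])
  have mf2: "fst \<in> measurable (condm E T) MX" using mf by (simp add: condm_def)
  have seteq: "fst -` S \<inter> space E \<inter> T = S \<times> {y}"
    using space_E[OF sE] sets.sets_into_space[OF S] by (auto simp: T_def)
  have e: "emeasure (condlaw MX E y) S = ennreal (measure E (S \<times> {y}) / measure E T)"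
  proof -
    have "emeasure (condlaw MX E y) S = emeasure (condm E T) (fst -` S \<inter> space (condm E T))"
      unfolding condlaw_def T_def[symmetric] using S mf2 by (subst emeasure_distr) auto
    also have "\<dots> = ennreal (measure E (fst -` S \<inter> space E \<inter> T) / measure E T)"
    proof -
      have sp: "space (condm E T) = space E" by (simp add: condm_def)
      have m: "fst -` S \<inter> space E \<in> sets E" using S by measurable
      show ?thesis unfolding sp by (rule condm_emeasure[OF finite_measure_axioms T m])
    qed
    finally show ?thesis using seteq by simp
  qed
  then show "emeasure (condlaw MX E y) S < \<infinity>" by simp
  have ST: "S \<times> {y} \<subseteq> T" using seteq by auto
  have "measure E T * (measure E (S \<times> {y}) / measure E T) = measure E (S \<times> {y})"
  proof (cases "measure E T = 0")
    case True
    then have "measure E (S \<times> {y}) = 0"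
      using finite_measure_mono[OF ST T] by (simp add: measure_nonneg antisym)
    then show ?thesis by simp
  qed simp
  then show "measure E {\<omega> \<in> space E. snd \<omega> = y} * enn2real (emeasure (condlaw MX E y) S) = measure E (S \<times> {y})"
    using e by (simp add: T_def[symmetric])
qed
lemma pt:
  fixes a b A B i j :: real
  assumes "0\<le>a" "0\<le>b" "0\<le>A" "0\<le>B" "(i=1\<and>j=0) \<or> (i=0\<and>j=1)"
  shows "-(A*(a*i)+B*(b*j)) \<le> b * (- min (A*(a/b)) B) \<and> b * (- min (A*(a/b)) B) \<le> 0"
proof (cases "b = 0")
  case True then show ?thesis using assms by auto
next
  case False
  then have b: "b > 0" using assms by auto
  have e: "b * (- min (A*(a/b)) B) = - min (A*a) (B*b)"
    using b by (simp add: min_def field_simps mult_le_cancel_left)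
  show ?thesis unfolding e using assms by (auto simp: min_def)
qed

lemma fdiv_bound:
  assumes pE: "prob_space E" and sE: "sets E = sets (MX \<Otimes>\<^sub>M (count_space (UNIV::bool set)))"
    and cp: "is_cond_prob MX E g" and cb: "0 \<le> cb" "cb \<le> 1"
  shows "- (\<integral>x. min ((1-cb)*g x) (cb*(1-g x)) \<partial>marg MX E)
     \<le> fdiv (marg MX E) (phi cb (prior E)) (condlaw MX E True) (condlaw MX E False)"
proof -
  interpret prob_space E by (rule pE)
  define \<mu> where "\<mu> = marg MX E"
  define \<pi> where "\<pi> = prior E"
  define P where "P = condlaw MX E True"
  define Q where "Q = condlaw MX E False"
  define S where "S = {x \<in> space MX. g x \<le> cb}"
  define Sc where "Sc = {x \<in> space MX. \<not> g x \<le> cb}"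
  define p where "p x = enn2real (RN_deriv \<mu> P x)" for x
  define q where "q x = enn2real (RN_deriv \<mu> Q x)" for x
  define A where "A = (1-cb)*\<pi>"
  define B where "B = cb*(1-\<pi>)"
  have mf[measurable]: "fst \<in> measurable E MX" by (rule meas_fst[OF sE])
  have gm[measurable]: "g \<in> borel_measurable MX" and g01: "\<forall>x\<in>space MX. 0 \<le> g x \<and> g x \<le> 1"
    using cp by (auto simp: is_cond_prob_def)
  have finm: "finite_measure \<mu>" unfolding \<mu>_def marg_def
    by (rule finite_measure.finite_measure_distr[OF finite_measure_axioms mf])
  have sm: "sets \<mu> = sets MX" "space \<mu> = space MX" by (simp_all add: \<mu>_def marg_def)
  have SM[measurable]: "S \<in> sets MX" "Sc \<in> sets MX" unfolding S_def Sc_def by measurable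
  have mmu: "\<And>N. measurable \<mu> N = measurable MX N" by (rule measurable_cong_sets[OF sm(1) refl])
  have T1: "{\<omega> \<in> space E. snd \<omega> = True} \<in> sets E" by (rule T_sets(1)[OF sE])
  have pi: "\<pi> = measure E {\<omega> \<in> space E. snd \<omega> = True}" by (simp add: \<pi>_def prior_def)
  have pi1: "1 - \<pi> = measure E {\<omega> \<in> space E. snd \<omega> = False}"
  proof -
    have "{\<omega> \<in> space E. snd \<omega> = False} = space E - {\<omega> \<in> space E. snd \<omega> = True}" by auto
    then show ?thesis using prob_compl[OF T1] pi by simp
  qed
  have pi01: "0 \<le> \<pi>" "\<pi> \<le> 1" using pi by auto
  have AB: "0 \<le> A" "0 \<le> B" using pi01 cb by (auto simp: A_def B_def)
  have RS: "integrable \<mu> (\<lambda>x. p x * indicator S x)" "(\<integral>x. p x * indicator S x \<partial>\<mu>) \<le> enn2real (emeasure P S)"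
    using RN_int[of S \<mu> P] condlaw_meas(1)[OF pE sE SM(1), of True] sm by (auto simp: p_def P_def)
  have RQ: "integrable \<mu> (\<lambda>x. q x * indicator Sc x)" "(\<integral>x. q x * indicator Sc x \<partial>\<mu>) \<le> enn2real (emeasure Q Sc)"
    using RN_int[of Sc \<mu> Q] condlaw_meas(1)[OF pE sE SM(2), of False] sm by (auto simp: q_def Q_def)
  have cP: "\<pi> * enn2real (emeasure P S) = measure E (S \<times> {True})"
    using condlaw_meas(2)[OF pE sE SM(1), of True] pi by (simp add: P_def)
  have cQ: "(1 - \<pi>) * enn2real (emeasure Q Sc) = measure E (Sc \<times> {False})"
    using condlaw_meas(2)[OF pE sE SM(2), of False] pi1 by (simp add: Q_def)
  have iS: "(\<integral>x. indicator S x * g x \<partial>\<mu>) = measure E (S \<times> {True})"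
    using cp SM by (simp add: is_cond_prob_def \<mu>_def)
  have iSc: "(\<integral>x. indicator Sc x * (1 - g x) \<partial>\<mu>) = measure E (Sc \<times> {False})"
  proof -
    have i1: "integrable \<mu> (indicator Sc :: _ \<Rightarrow> real)"
      using finm by (intro finite_measure.integrable_const_bound[OF finm, of _ 1] AE_I2) (auto simp: sm mmu)
    have i2: "integrable \<mu> (\<lambda>x. indicator Sc x * g x)"
      using g01 by (intro finite_measure.integrable_const_bound[OF finm, of _ 1] AE_I2) (auto simp: sm mmu indicator_def)
    have "(\<integral>x. indicator Sc x * (1 - g x) \<partial>\<mu>) = (\<integral>x. indicator Sc x - indicator Sc x * g x \<partial>\<mu>)"
      by (simp add: algebra_simps)
    also have "\<dots> = (\<integral>x. indicator Sc x \<partial>\<mu>) - (\<integral>x. indicator Sc x * g x \<partial>\<mu>)"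
      using i1 i2 by (rule Bochner_Integration.integral_diff)
    also have "(\<integral>x. indicator Sc x * g x \<partial>\<mu>) = measure E (Sc \<times> {True})"
      using cp SM by (simp add: is_cond_prob_def \<mu>_def)
    also have "(\<integral>x. indicator Sc x \<partial>\<mu>) = measure E (Sc \<times> {True}) + measure E (Sc \<times> {False})"
    proof -
      have "(\<integral>x. indicator Sc x \<partial>\<mu>) = measure \<mu> Sc"
        using sets.sets_into_space[OF SM(2)] by (simp add: sm Int_absorb2)
      also have "\<dots> = measure E (fst -` Sc \<inter> space E)"
        unfolding \<mu>_def marg_def by (rule measure_distr) auto
      also have "fst -` Sc \<inter> space E = Sc \<times> {True} \<union> Sc \<times> {False}"
        using space_E[OF sE] sets.sets_into_space[OF SM(2)] by auto
      also have "measure E (Sc \<times> {True} \<union> Sc \<times> {False}) = measure E (Sc \<times> {True}) + measure E (Sc \<times> {False})"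
        using T_sets(2)[OF sE SM(2)] by (intro measure_Union) auto
      finally show ?thesis .
    qed
    finally show ?thesis by simp
  qed
  define G where "G x = q x * phi cb \<pi> (p x / q x)" for x
  define h where "h x = -(A*(p x * indicator S x) + B*(q x * indicator Sc x))" for x
  have pw: "h x \<le> G x \<and> G x \<le> 0" if x: "x \<in> space MX" for x
  proof -
    have "(indicator S x = (1::real) \<and> indicator Sc x = (0::real)) \<or> (indicator S x = (0::real) \<and> indicator Sc x = (1::real))"
      using x by (auto simp: S_def Sc_def indicator_def)
    moreover have "phi cb \<pi> (p x / q x) = - min (A*(p x/q x)) B"
      by (simp add: phi_def A_def B_def)
    ultimately show ?thesis
      using pt[of "p x" "q x" A B "indicator S x" "indicator Sc x"] AB
      by (simp add: h_def G_def p_def q_def)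
  qed
  have Gm: "G \<in> borel_measurable \<mu>"
    unfolding G_def phi_def p_def q_def by measurable
  have hint: "integrable \<mu> h"
    unfolding h_def using RS(1) RQ(1) by auto
  have Gint: "integrable \<mu> G"
  proof (rule Bochner_Integration.integrable_bound[OF hint Gm])
    show "AE x in \<mu>. norm (G x) \<le> norm (h x)"
    proof (rule AE_I2)
      fix x assume "x \<in> space \<mu>"
      then have "h x \<le> G x \<and> G x \<le> 0" using pw by (simp add: sm)
      then show "norm (G x) \<le> norm (h x)" by simp
    qed
  qed
  have "(\<integral>x. h x \<partial>\<mu>) \<le> (\<integral>x. G x \<partial>\<mu>)"
    using hint Gint pw by (intro integral_mono) (auto simp: sm)
  moreover have "(\<integral>x. h x \<partial>\<mu>) = -(A * (\<integral>x. p x * indicator S x \<partial>\<mu>) + B * (\<integral>x. q x * indicator Sc x \<partial>\<mu>))"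
    unfolding h_def using RS(1) RQ(1) by simp
  moreover have "A * (\<integral>x. p x * indicator S x \<partial>\<mu>) + B * (\<integral>x. q x * indicator Sc x \<partial>\<mu>)
      \<le> A * enn2real (emeasure P S) + B * enn2real (emeasure Q Sc)"
    using RS(2) RQ(2) AB by (intro add_mono mult_left_mono) auto
  moreover have "A * enn2real (emeasure P S) + B * enn2real (emeasure Q Sc)
      = (1-cb) * (\<integral>x. indicator S x * g x \<partial>\<mu>) + cb * (\<integral>x. indicator Sc x * (1 - g x) \<partial>\<mu>)"
    unfolding iS iSc cP[symmetric] cQ[symmetric] by (simp add: A_def B_def)
  moreover have "(\<integral>x. min ((1-cb)*g x) (cb*(1-g x)) \<partial>\<mu>)
      = (1-cb) * (\<integral>x. indicator S x * g x \<partial>\<mu>) + cb * (\<integral>x. indicator Sc x * (1 - g x) \<partial>\<mu>)"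
  proof -
    have i1: "integrable \<mu> (\<lambda>x. indicator S x * g x)"
      using g01 by (intro finite_measure.integrable_const_bound[OF finm, of _ 1] AE_I2) (auto simp: sm mmu indicator_def)
    have i2: "integrable \<mu> (\<lambda>x. indicator Sc x * (1 - g x))"
      using g01 by (intro finite_measure.integrable_const_bound[OF finm, of _ 1] AE_I2) (auto simp: sm mmu indicator_def)
    have "(\<integral>x. min ((1-cb)*g x) (cb*(1-g x)) \<partial>\<mu>)
        = (\<integral>x. (1-cb) * (indicator S x * g x) + cb * (indicator Sc x * (1 - g x)) \<partial>\<mu>)"
    proof (rule Bochner_Integration.integral_cong)
      fix x assume "x \<in> space \<mu>"
      then have x: "x \<in> space MX" by (simp add: sm)
      show "min ((1-cb)*g x) (cb*(1-g x)) = (1-cb) * (indicator S x * g x) + cb * (indicator Sc x * (1 - g x))"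
      proof (cases "g x \<le> cb")
        case True
        then have "(1-cb)*g x \<le> cb*(1-g x)" by (simp add: algebra_simps)
        then show ?thesis using True x by (simp add: S_def Sc_def indicator_def)
      next
        case False
        then have "\<not> (1-cb)*g x \<le> cb*(1-g x)" by (simp add: algebra_simps)
        then show ?thesis using False x by (simp add: S_def Sc_def indicator_def)
      qed
    qed simp
    also have "\<dots> = (1-cb) * (\<integral>x. indicator S x * g x \<partial>\<mu>) + cb * (\<integral>x. indicator Sc x * (1 - g x) \<partial>\<mu>)"
      using i1 i2 by simp
    finally show ?thesis .
  qed
  ultimately have "- (\<integral>x. min ((1-cb)*g x) (cb*(1-g x)) \<partial>\<mu>) \<le> (\<integral>x. G x \<partial>\<mu>)" by linarith
  then show ?thesis
    by (simp add: fdiv_def G_def \<mu>_def \<pi>_def p_def q_def P_def Q_def)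
qed
lemma sgn_iff: "((u::real)-cb)*(v-c) < 0 \<longleftrightarrow> (u<cb \<and> c<v) \<or> (cb<u \<and> v<c)"
  by (auto simp: mult_less_0_iff)
lemma kp1:
  fixes u v c cb :: real
  assumes "0 \<le> u" "u \<le> 1" "0 \<le> cb" "cb \<le> 1"
  shows "Bfun c cb u v + min ((1-cb)*u) (cb*(1-u)) \<le> (1-cb)*(u*(1-(if c < v then 1 else 0))) + cb*((1-u)*(if c < v then 1 else 0))"
  using assms unfolding Bfun_def sgn_iff
  by (cases "c < v"; cases "u < cb"; cases "u = cb"; cases "v = c")
     (auto simp: min_def algebra_simps)
lemma kp2:
  fixes u v c cb :: real
  assumes "0 \<le> u" "u \<le> 1" "0 \<le> cb" "cb \<le> 1"
  shows "Bfun (-c) cb u (-v) + min ((1-cb)*u) (cb*(1-u)) \<le> (1-cb)*(u*(1-(1 - (if c < v then 1 else 0)))) + cb*((1-u)*(1 - (if c < v then 1 else 0)))"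
  using assms unfolding Bfun_def sgn_iff
  by (cases "c < v"; cases "u < cb"; cases "u = cb"; cases "v = c")
     (auto simp: min_def algebra_simps)
lemma opt_pt:
  fixes e f c :: real
  assumes "0 \<le> e" "e \<le> 1" "0 \<le> c" "c \<le> 1" "0 \<le> f" "f \<le> 1"
  shows "(1-c)*(e*(1-(if c < e then 1 else 0))) + c*((1-e)*(if c < e then 1 else 0)) \<le> (1-c)*(e*(1-f)) + c*((1-e)*f)"
proof (cases "c < e")
  case True
  have "(1-c)*(e*(1-f)) + c*((1-e)*f) - c*(1-e) = (1-f)*(e-c)" by (simp add: algebra_simps)
  moreover have "0 \<le> (1-f)*(e-c)" using True assms by simp
  ultimately show ?thesis using True by simp
next
  case False
  have "(1-c)*(e*(1-f)) + c*((1-e)*f) - (1-c)*e = f*(c-e)" by (simp add: algebra_simps)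
  moreover have "0 \<le> f*(c-e)" using False assms by simp
  ultimately show ?thesis using False by simp
qed

lemma m3: "0\<le>(a::real) \<Longrightarrow> a\<le>1 \<Longrightarrow> 0\<le>b \<Longrightarrow> b\<le>1 \<Longrightarrow> 0\<le>d \<Longrightarrow> d\<le>1 \<Longrightarrow> 0 \<le> a*(b*d) \<and> a*(b*d) \<le> 1"
  by (simp add: mult_le_one)

lemma Delta_bound:
  assumes pE: "prob_space E" and sE: "sets E = sets (MX \<Otimes>\<^sub>M (count_space (UNIV::bool set)))"
    and cp: "is_cond_prob MX E g" and cb: "0 \<le> cb" "cb \<le> 1"
    and fm[measurable]: "f \<in> borel_measurable MX" and f01: "\<forall>x\<in>space MX. 0 \<le> f x \<and> f x \<le> 1"
    and em[measurable]: "e \<in> borel_measurable MX"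
    and pw: "\<forall>x\<in>space MX. Bfun c' cb (g x) (e x) + min ((1-cb)*g x) (cb*(1-g x))
               \<le> (1-cb)*(g x*(1-f x)) + cb*((1 - g x)* f x)"
  shows "Delta MX E c' cb g e \<le> CS f E cb"
proof -
  interpret prob_space E by (rule pE)
  have mf[measurable]: "fst \<in> measurable E MX" by (rule meas_fst[OF sE])
  have gm[measurable]: "g \<in> borel_measurable MX" and g01: "\<forall>x\<in>space MX. 0 \<le> g x \<and> g x \<le> 1"
    using cp by (auto simp: is_cond_prob_def)
  have finm: "finite_measure (marg MX E)" unfolding marg_def
    by (rule finite_measure.finite_measure_distr[OF finite_measure_axioms mf])
  have sm: "space (marg MX E) = space MX" by (simp add: marg_def)
  have i1: "integrable (marg MX E) (\<lambda>x. Bfun c' cb (g x) (e x))"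
    using g01 cb unfolding Bfun_def
    by (intro finite_measure.integrable_const_bound[OF finm, of _ 1] AE_I2) (auto simp: sm marg_def)
  have i2: "integrable (marg MX E) (\<lambda>x. min ((1-cb)*g x) (cb*(1-g x)))"
    using g01 cb
    by (intro finite_measure.integrable_const_bound[OF finm, of _ 1] AE_I2) (auto simp: sm marg_def min_def intro!: mult_le_one)
  have i3: "integrable (marg MX E) (\<lambda>x. (1-cb)*(g x*(1-f x)) + cb*((1 - g x)* f x))"
  proof (intro finite_measure.integrable_const_bound[OF finm, of _ 2] AE_I2)
    fix x assume "x \<in> space (marg MX E)"
    then have x: "x \<in> space MX" by (simp add: sm)
    have a: "0 \<le> (1-cb)*(g x*(1-f x)) \<and> (1-cb)*(g x*(1-f x)) \<le> 1"
      using m3[of "1-cb" "g x" "1 - f x"] g01 f01 cb x by auto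
    have b: "0 \<le> cb*((1 - g x)* f x) \<and> cb*((1 - g x)* f x) \<le> 1"
      using m3[of "cb" "1 - g x" "f x"] g01 f01 cb x by auto
    show "norm ((1-cb)*(g x*(1-f x)) + cb*((1 - g x)* f x)) \<le> 2" using a b by simp
  qed (simp add: marg_def)
  have "Delta MX E c' cb g e \<le> (\<integral>x. Bfun c' cb (g x) (e x) \<partial>marg MX E) + (\<integral>x. min ((1-cb)*g x) (cb*(1-g x)) \<partial>marg MX E)"
    using fdiv_bound[OF pE sE cp cb] by (simp add: Delta_def)
  also have "\<dots> = (\<integral>x. Bfun c' cb (g x) (e x) + min ((1-cb)*g x) (cb*(1-g x)) \<partial>marg MX E)"
    using i1 i2 by simp
  also have "\<dots> \<le> (\<integral>x. (1-cb)*(g x*(1-f x)) + cb*((1 - g x)* f x) \<partial>marg MX E)"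
    using i1 i2 i3 pw by (intro integral_mono) (auto simp: sm)
  also have "\<dots> = CS f E cb"
    by (rule CS_formula[OF pE sE cp fm f01, symmetric])
  finally show ?thesis .
qed

lemma null_int:
  assumes "emeasure M (space M) = 0"
  shows "integral\<^sup>L M (f :: _ \<Rightarrow> real) = 0"
proof -
  have "AE x in M. f x = 0"
    using assms by (intro AE_I'[of "space M"]) (auto simp: null_sets_def)
  then show ?thesis by (rule integral_eq_zero_AE)
qed

lemma null_case:
  assumes sE: "sets E = sets (MX \<Otimes>\<^sub>M (count_space (UNIV::bool set)))"
    and z: "emeasure E (space E) = 0"
  shows "Delta MX E c' cb g e = 0" "CS f E cb = 0"
proof -
  have mz: "measure E A = 0" for A
  proof -
    have "emeasure E A = 0" using emeasure_space[of E A] z by simp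
    then show ?thesis by (simp add: measure_def)
  qed
  show "CS f E cb = 0" by (simp add: CS_def FNR_def FPR_def cexp_def prior_def mz)
  have mf[measurable]: "fst \<in> measurable E MX" by (rule meas_fst[OF sE])
  have z2: "emeasure (marg MX E) (space (marg MX E)) = 0"
    unfolding marg_def using emeasure_space[of E "fst -` space MX \<inter> space E"] z
    by (subst emeasure_distr) auto
  show "Delta MX E c' cb g e = 0"
    by (simp add: Delta_def fdiv_def null_int[OF z2])
qed

lemma Vval_eq:
  assumes f0: "f0 \<in> classifiers MX" and t: "\<tau> \<le> CSd f0 Db cb"
    and opt: "\<forall>f\<in>classifiers MX. CS f0 D c \<le> CS f D c"
  shows "Vval MX D Db c cb \<tau> = ereal (CS f0 D c)"
  unfolding Vval_def
proof (rule antisym)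
  show "Inf {ereal (CS f D c) |f. f \<in> classifiers MX \<and> \<tau> \<le> CSd f Db cb} \<le> ereal (CS f0 D c)"
    using f0 t by (intro Inf_lower) auto
  show "ereal (CS f0 D c) \<le> Inf {ereal (CS f D c) |f. f \<in> classifiers MX \<and> \<tau> \<le> CSd f Db cb}"
    using opt by (intro Inf_greatest) auto
qed

theorem proposition3:
  fixes MX :: "'a measure" and M :: "('a \<times> bool \<times> bool) measure"
    and Db :: "('a \<times> bool) measure"
    and c cb :: real and eta etab :: "'a \<Rightarrow> real"
  assumes "prob_space M"
    and "sets M = sets (MX \<Otimes>\<^sub>M (count_space UNIV \<Otimes>\<^sub>M count_space UNIV))"
    and "0 \<le> c" "c \<le> 1" "0 \<le> cb" "cb \<le> 1"
    and "Db = D_DP MX M \<or> Db = D_EO MX M"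
    and "is_cond_prob MX (D_of MX M) eta"
    and "is_cond_prob MX Db etab"
  shows "\<forall>\<tau>. 0 \<le> \<tau> \<and> \<tau> \<le> min (Delta MX Db c cb etab eta) (Delta MX Db (- c) cb etab (\<lambda>x. - eta x))
           \<longrightarrow> frontier MX (D_of MX M) Db c cb \<tau> = 0"
proof -
  note pM = assms(1) and sM = assms(2) and c = assms(3,4) and cb = assms(5,6)
    and cpD = assms(8) and cpB = assms(9)
  interpret prob_space M by (rule pM)
  have mM: "measurable M = measurable (MX \<Otimes>\<^sub>M (count_space UNIV \<Otimes>\<^sub>M count_space UNIV))"
    by (intro ext measurable_cong_sets[OF sM refl])
  have m1: "(\<lambda>\<omega>. (fst \<omega>, snd (snd \<omega>))) \<in> measurable M (MX \<Otimes>\<^sub>M count_space UNIV)"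
    unfolding mM by measurable
  have m2: "(\<lambda>\<omega>. (fst \<omega>, fst (snd \<omega>))) \<in> measurable M (MX \<Otimes>\<^sub>M count_space UNIV)"
    unfolding mM by measurable
  define D where "D = D_of MX M"
  have pD: "prob_space D" unfolding D_def D_of_def by (rule prob_space_distr[OF m1])
  have sD: "sets D = sets (MX \<Otimes>\<^sub>M count_space UNIV)" by (simp add: D_def D_of_def)
  have sB: "sets Db = sets (MX \<Otimes>\<^sub>M count_space UNIV)"
    using assms(7) by (auto simp: D_DP_def D_EO_def)
  have PB: "prob_space Db \<or> emeasure Db (space Db) = 0"
    using assms(7)
  proof
    assume "Db = D_DP MX M"
    then show ?thesis using prob_space_distr[OF m2] by (simp add: D_DP_def)
  next
    assume Db: "Db = D_EO MX M"
    define T where "T = {\<omega> \<in> space M. snd (snd \<omega>)}"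
    have T: "T \<in> sets M"
    proof -
      have "(\<lambda>\<omega>. snd (snd \<omega>)) \<in> measurable M (count_space UNIV)" unfolding mM by measurable
      then show ?thesis unfolding T_def by measurable
    qed
    have m2': "(\<lambda>\<omega>. (fst \<omega>, fst (snd \<omega>))) \<in> measurable (condm M T) (MX \<Otimes>\<^sub>M count_space UNIV)"
      using m2 by (simp add: condm_def)
    show ?thesis
      using PN_distr[OF condm_PN[OF finite_measure_axioms T] m2'] Db
      by (simp add: D_EO_def T_def)
  qed
  have etam[measurable]: "eta \<in> borel_measurable MX" and eta01: "\<forall>x\<in>space MX. 0 \<le> eta x \<and> eta x \<le> 1"
    using cpD by (auto simp: is_cond_prob_def)
  have etabm[measurable]: "etab \<in> borel_measurable MX" and etab01: "\<forall>x\<in>space MX. 0 \<le> etab x \<and> etab x \<le> 1"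
    using cpB by (auto simp: is_cond_prob_def)
  define f0 where "f0 x = (if c < eta x then 1 else 0 :: real)" for x
  have f0m[measurable]: "f0 \<in> borel_measurable MX" unfolding f0_def by measurable
  have f0c: "f0 \<in> classifiers MX" by (simp add: classifiers_def f0_def)
  have f1m[measurable]: "(\<lambda>x. 1 - f0 x) \<in> borel_measurable MX" by measurable
  have opt: "\<forall>f\<in>classifiers MX. CS f0 D c \<le> CS f D c"
  proof
    fix f assume "f \<in> classifiers MX"
    then have fm[measurable]: "f \<in> borel_measurable MX" and f01: "\<forall>x\<in>space MX. 0 \<le> f x \<and> f x \<le> 1"
      by (auto simp: classifiers_def)
    have f001: "\<forall>x\<in>space MX. 0 \<le> f0 x \<and> f0 x \<le> 1" by (simp add: f0_def)
    have fin: "finite_measure (marg MX D)" unfolding marg_def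
      by (rule finite_measure.finite_measure_distr[OF prob_space.finite_measure[OF pD] meas_fst[OF sD]])
    have sm: "space (marg MX D) = space MX" by (simp add: marg_def)
    have int: "integrable (marg MX D) (\<lambda>x. (1-c)*(eta x*(1-h x)) + c*((1 - eta x)* h x))"
      if hm[measurable]: "h \<in> borel_measurable MX" and h01: "\<forall>x\<in>space MX. 0 \<le> h x \<and> h x \<le> 1" for h
    proof (intro finite_measure.integrable_const_bound[OF fin, of _ 2] AE_I2)
      fix x assume "x \<in> space (marg MX D)"
      then have x: "x \<in> space MX" by (simp add: sm)
      have a: "0 \<le> (1-c)*(eta x*(1-h x)) \<and> (1-c)*(eta x*(1-h x)) \<le> 1"
        using m3[of "1-c" "eta x" "1 - h x"] eta01 h01 c x by auto
      have b: "0 \<le> c*((1 - eta x)* h x) \<and> c*((1 - eta x)* h x) \<le> 1"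
        using m3[of "c" "1 - eta x" "h x"] eta01 h01 c x by auto
      show "norm ((1-c)*(eta x*(1-h x)) + c*((1 - eta x)* h x)) \<le> 2" using a b by simp
    qed (simp add: marg_def)
    show "CS f0 D c \<le> CS f D c"
      unfolding CS_formula[OF pD sD cpD[folded D_def] f0m f001]
        CS_formula[OF pD sD cpD[folded D_def] fm f01]
      using int[OF f0m f001] int[OF fm f01] opt_pt eta01 f01 c
      by (intro integral_mono) (auto simp: sm f0_def)
  qed
  have key: "min (Delta MX Db c cb etab eta) (Delta MX Db (- c) cb etab (\<lambda>x. - eta x)) \<le> CSd f0 Db cb"
  proof (cases "prob_space Db")
    case True
    have f001: "\<forall>x\<in>space MX. 0 \<le> f0 x \<and> f0 x \<le> 1" by (simp add: f0_def)
    have f101: "\<forall>x\<in>space MX. 0 \<le> 1 - f0 x \<and> 1 - f0 x \<le> 1" by (simp add: f0_def)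
    have d1: "Delta MX Db c cb etab eta \<le> CS f0 Db cb"
      using kp1 etab01 cb
      by (intro Delta_bound[OF True sB cpB cb f0m f001 etam]) (auto simp: f0_def)
    have nem[measurable]: "(\<lambda>x. - eta x) \<in> borel_measurable MX" by measurable
    have d2: "Delta MX Db (- c) cb etab (\<lambda>x. - eta x) \<le> CS (\<lambda>x. 1 - f0 x) Db cb"
      using kp2 etab01 cb
      by (intro Delta_bound[OF True sB cpB cb f1m f101 nem]) (auto simp: f0_def)
    show ?thesis using d1 d2 by (auto simp: CSd_def)
  next
    case False
    then have z: "emeasure Db (space Db) = 0" using PB by auto
    show ?thesis using null_case[OF sB z] by (simp add: CSd_def)
  qed
  show ?thesis
  proof (intro allI impI)
    fix \<tau> :: real assume t: "0 \<le> \<tau> \<and> \<tau> \<le> min (Delta MX Db c cb etab eta) (Delta MX Db (- c) cb etab (\<lambda>x. - eta x))"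
    have "Vval MX D Db c cb \<tau> = ereal (CS f0 D c)"
      using t key by (intro Vval_eq[OF f0c _ opt]) auto
    moreover have "Vval MX D Db c cb 0 = ereal (CS f0 D c)"
      using t key by (intro Vval_eq[OF f0c _ opt]) auto
    ultimately show "frontier MX (D_of MX M) Db c cb \<tau> = 0"
      by (simp add: frontier_def D_def)
  qed
qed

end
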